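(* There is an absolute constant $\mathfrak{M}>0$ such that for all $\alpha>-1$, $\beta>0$, $\eta>0$, every bounded continuous $\Phi:[0,\infty)\to\mathbb{R}$ and every $x\in[0,\infty)$, $$|\mathcal{R}_{\eta}^{(\alpha,\beta)}(\Phi;x)-\Phi(x)|\le \mathfrak{M}\,\omega_2\!\left(\Phi,\sqrt{\delta/2}\right)+\omega\!\left(\Phi,\frac{1+\alpha}{\eta}\right),\qquad \delta=\mu_{\eta,2}(x)+\left(\frac{1+\alpha}{\eta}\right)^2,$$ where $\mu_{\eta,2}(x)=\frac{x(3\beta+1)}{\beta\eta}+\frac{\alpha^2\beta+4\alpha\beta+3\beta+\alpha+1}{\beta\eta^2}$.
   Context: The generalized Laguerre polynomials are $\mathcal{L}_k^{(\alpha)}(t)=\sum_{i=0}^{k}\frac{(-1)^i}{i!}\binom{k+\alpha}{k-i}t^i$. Put $p_{\eta,k}(x)=e^{-\eta x/2}2^{-\alpha-1}2^{-k}\mathcal{L}_k^{(\alpha)}(-\eta x/2)$ and, for $k\ge1$, $z>0$, $\mathcal{I}_{k,\eta}^{\beta}(z)=\frac{\eta\beta e^{-\eta\beta z}(\eta\beta z)^{k\beta-1}}{\Gamma(k\beta)}$. The operator is $\mathcal{R}_{\eta}^{(\alpha,\beta)}(\Phi;x)=p_{\eta,0}(x)\Phi(0)+\sum_{k=1}^{\infty}p_{\eta,k}(x)\int_0^\infty\mathcal{I}_{k,\eta}^{\beta}(z)\Phi(z)\,dz$. The modulus of continuity is $\omega(\Phi,t)=\sup\{|\Phi(z)-\Phi(y)|: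 y,z\ge0,\ |z-y|\le t\}$ and the second-order modulus of smoothness is $\omega_2(\Phi,t)=\sup_{0<\epsilon\le t}\sup_{y\ge0}|\Phi(y+2\epsilon)-2\Phi(y+\epsilon)+\Phi(y)|$. *)

theory Defs
  imports "HOL-Analysis.Analysis"
begin

definition laguerre :: "real \<Rightarrow> nat \<Rightarrow> real \<Rightarrow> real" where
  "laguerre \<alpha> k t = (\<Sum>i=0..k. (-1)^i / fact i * ((real k + \<alpha>) gchoose (k - i)) * t^i)"

definition p_basis :: "real \<Rightarrow> real \<Rightarrow> nat \<Rightarrow> real \<Rightarrow> real" where
  "p_basis \<alpha> \<eta> k x = exp (-\<eta> * x / 2) * 2 powr (-\<alpha> - 1) * 2 powr (- real k)
      * laguerre \<alpha> k (-\<eta> * x / 2)"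

definition I_kernel :: "real \<Rightarrow> real \<Rightarrow> nat \<Rightarrow> real \<Rightarrow> real" where
  "I_kernel \<beta> \<eta> k z = \<eta> * \<beta> * exp (-\<eta> * \<beta> * z) * (\<eta> * \<beta> * z) powr (real k * \<beta> - 1)
      / Gamma (real k * \<beta>)"

definition R_op :: "real \<Rightarrow> real \<Rightarrow> real \<Rightarrow> (real \<Rightarrow> real) \<Rightarrow> real \<Rightarrow> real" where
  "R_op \<alpha> \<beta> \<eta> \<Phi> x = p_basis \<alpha> \<eta> 0 x * \<Phi> 0
     + (\<Sum>k. p_basis \<alpha> \<eta> (Suc k) x * integral {0<..} (\<lambda>z. I_kernel \<beta> \<eta> (Suc k) z * \<Phi> z))"

definition modcont :: "(real \<Rightarrow> real) \<Rightarrow> real \<Rightarrow> real" where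
  "modcont \<Phi> t = Sup {\<bar>\<Phi> z - \<Phi> y\<bar> | z y. z \<ge> 0 \<and> y \<ge> 0 \<and> \<bar>z - y\<bar> \<le> t}"

definition modsmooth2 :: "(real \<Rightarrow> real) \<Rightarrow> real \<Rightarrow> real" where
  "modsmooth2 \<Phi> t = Sup {\<bar>\<Phi> (y + 2*\<epsilon>) - 2 * \<Phi> (y + \<epsilon>) + \<Phi> y\<bar> | \<epsilon> y. 0 < \<epsilon> \<and> \<epsilon> \<le> t \<and> y \<ge> 0}"

definition mu2 :: "real \<Rightarrow> real \<Rightarrow> real \<Rightarrow> real \<Rightarrow> real" where
  "mu2 \<alpha> \<beta> \<eta> x = x * (3*\<beta> + 1) / (\<beta> * \<eta>)
     + (\<alpha>^2 * \<beta> + 4*\<alpha>*\<beta> + 3*\<beta> + \<alpha> + 1) / (\<beta> * \<eta>^2)"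

end

theory Submission
  imports Defs
begin


definition nb :: "real \<Rightarrow> nat \<Rightarrow> real" where "nb c j = ((of_nat j + c - 1) gchoose j)"

lemma nb_sums0: "(\<lambda>j. nb c j * (1/2)^j) sums (2 powr c)"
proof -
  have "(\<lambda>n. ((-c) gchoose n) * (-1/2)^n) sums (1 + (-1/2)) powr (-c)"
    by (rule gen_binomial_real) simp
  moreover have "((-c) gchoose n) * (-1/2)^n = nb c n * (1/2)^n" for n
  proof -
    have "((-c) gchoose n) = (-1)^n * nb c n"
      unfolding nb_def by (subst gbinomial_negated_upper) (simp add: algebra_simps)
    moreover have "(-1/2::real)^n = (-1)^n * (1/2)^n"
      by (metis mult_minus1 power_mult_distrib divide_minus_left)
    ultimately show ?thesis by (simp add: power_mult_distrib[symmetric])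
  qed
  moreover have "(1 + (-1/2::real)) powr (-c) = 2 powr c"
    by (simp add: powr_minus_divide powr_divide)
  ultimately show ?thesis by simp
qed

lemma nb_shift: "of_nat (Suc j) * nb c (Suc j) = c * nb (c+1) j"
proof -
  have "of_nat (Suc j) * nb c (Suc j) = of_nat (Suc j) * ((of_nat j + c) gchoose Suc j)"
    unfolding nb_def by (simp add: algebra_simps)
  also have "\<dots> = (of_nat j + c) * ((of_nat j + c - 1) gchoose j)"
    by (rule gbinomial_absorption)
  also have "\<dots> = c * ((of_nat j + c) gchoose j)"
    using gbinomial_absorb_comp[of "of_nat j + c" j] by simp
  finally show ?thesis unfolding nb_def by (simp add: algebra_simps)
qed

lemma nb_sums1: "(\<lambda>j. of_nat j * nb c j * (1/2)^j) sums (c * 2 powr c)"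
proof -
  have "(\<lambda>j. (c/2) * (nb (c+1) j * (1/2)^j)) sums ((c/2) * 2 powr (c+1))"
    by (intro sums_mult nb_sums0)
  moreover have "(c/2) * (nb (c+1) j * (1/2)^j) = of_nat (Suc j) * nb c (Suc j) * (1/2)^(Suc j)" for j
    using nb_shift[of j c] by simp
  moreover have "(c/2) * 2 powr (c+1) = c * 2 powr c"
    by (simp add: powr_add)
  ultimately have "(\<lambda>j. of_nat (Suc j) * nb c (Suc j) * (1/2)^(Suc j)) sums (c * 2 powr c)"
    by (metis (no_types, lifting) sums_cong)
  thus ?thesis by (subst (asm) sums_Suc_iff) simp
qed

lemma nb_sums2: "(\<lambda>j. (of_nat j)^2 * nb c j * (1/2)^j) sums (c * (c+2) * 2 powr c)"
proof -
  have "(\<lambda>j. (c/2) * (of_nat j * nb (c+1) j * (1/2)^j) + (c/2) * (nb (c+1) j * (1/2)^j))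
      sums ((c/2) * ((c+1) * 2 powr (c+1)) + (c/2) * 2 powr (c+1))"
    by (intro sums_add sums_mult nb_sums0 nb_sums1)
  moreover have "(c/2) * (of_nat j * nb (c+1) j * (1/2)^j) + (c/2) * (nb (c+1) j * (1/2)^j)
     = (of_nat (Suc j))^2 * nb c (Suc j) * (1/2)^(Suc j)" for j
  proof -
    have "(of_nat (Suc j))^2 * nb c (Suc j) * (1/2)^(Suc j) = of_nat (Suc j) * (of_nat (Suc j) * nb c (Suc j)) * (1/2)^(Suc j)"
      by (simp add: power2_eq_square)
    also have "\<dots> = of_nat (Suc j) * (c * nb (c+1) j) * (1/2)^(Suc j)" by (simp only: nb_shift)
    finally show ?thesis by (simp add: algebra_simps)
  qed
  moreover have "(c/2) * ((c+1) * 2 powr (c+1)) + (c/2) * 2 powr (c+1) = c * (c+2) * 2 powr c"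
    by (simp add: powr_add algebra_simps)
  ultimately have "(\<lambda>j. (of_nat (Suc j))^2 * nb c (Suc j) * (1/2)^(Suc j)) sums (c * (c+2) * 2 powr c)"
    by (metis (no_types, lifting) sums_cong)
  thus ?thesis by (subst (asm) sums_Suc_iff) simp
qed

lemma nb_nonneg: "c > 0 \<Longrightarrow> nb c j \<ge> 0"
  unfolding nb_def gbinomial_pochhammer' by (simp add: pochhammer_pos less_imp_le)


lemma pois0: "(\<lambda>i. s^i / fact i) sums exp (s::real)"
  using exp_converges[of s] by (simp add: divide_inverse mult.commute)

lemma pois_shift: "of_nat (Suc i) * ((s::real)^(Suc i) / fact (Suc i)) = s * (s^i / fact i)"
proof -
  have n: "real (Suc i) > 0" "(fact (Suc i)::real) = real (Suc i) * fact i" by auto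
  show ?thesis unfolding n(2) using n(1) by simp
qed

lemma pois1: "(\<lambda>i. of_nat i * (s^i / fact i)) sums (s * exp (s::real))"
proof -
  have "(\<lambda>i. s * (s^i / fact i)) sums (s * exp s)" by (intro sums_mult pois0)
  hence "(\<lambda>i. of_nat (Suc i) * (s^(Suc i) / fact (Suc i))) sums (s * exp s)"
    by (simp only: pois_shift)
  thus ?thesis by (subst (asm) sums_Suc_iff) simp
qed

lemma pois2: "(\<lambda>i. (of_nat i)^2 * (s^i / fact i)) sums ((s^2 + s) * exp (s::real))"
proof -
  have "(\<lambda>i. s * (of_nat i * (s^i / fact i)) + s * (s^i / fact i)) sums (s * (s * exp s) + s * exp s)"
    by (intro sums_add sums_mult pois0 pois1)
  moreover have "s * (of_nat i * (s^i / fact i)) + s * (s^i / fact i) = (of_nat (Suc i))^2 * (s^(Suc i) / fact (Suc i))" for i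
  proof -
    have "(of_nat (Suc i))^2 * (s^(Suc i) / fact (Suc i)) = of_nat (Suc i) * (of_nat (Suc i) * (s^(Suc i) / fact (Suc i)))"
      by (simp only: power2_eq_square mult.assoc)
    also have "\<dots> = of_nat (Suc i) * (s * (s^i / fact i))" by (simp only: pois_shift)
    also have "\<dots> = s * (of_nat i * (s^i / fact i)) + s * (s^i / fact i)"
      by (simp only: of_nat_Suc distrib_right distrib_left mult_1_left mult.left_commute add.commute)
    finally show ?thesis by simp
  qed
  moreover have "s * (s * exp s) + s * exp s = (s^2 + s) * exp s" by (simp add: power2_eq_square algebra_simps)
  ultimately have "(\<lambda>i. (of_nat (Suc i))^2 * (s^(Suc i) / fact (Suc i))) sums ((s^2 + s) * exp s)"
    by (metis (no_types, lifting) sums_cong)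
  thus ?thesis by (subst (asm) sums_Suc_iff) simp
qed


definition wP :: "real \<Rightarrow> nat \<Rightarrow> real" where "wP s i = exp (-s) * s^i / fact i"
definition qN :: "real \<Rightarrow> nat \<Rightarrow> nat \<Rightarrow> real" where
  "qN a i j = 2 powr (-(of_nat i + a + 1)) * nb (of_nat i + a + 1) j * (1/2)^j"
definition pK :: "real \<Rightarrow> real \<Rightarrow> nat \<Rightarrow> real" where
  "pK a s k = (\<Sum>i\<le>k. wP s i * qN a i (k - i))"

lemma wP_nonneg: "s \<ge> 0 \<Longrightarrow> wP s i \<ge> 0" unfolding wP_def by simp
lemma qN_nonneg: "a > -1 \<Longrightarrow> qN a i j \<ge> 0" unfolding qN_def
  by (intro mult_nonneg_nonneg nb_nonneg) auto
lemma pK_nonneg: "a > -1 \<Longrightarrow> s \<ge> 0 \<Longrightarrow> pK a s k \<ge> 0"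
  unfolding pK_def by (intro sum_nonneg mult_nonneg_nonneg wP_nonneg qN_nonneg)

lemma double_sum:
  fixes f :: "nat \<Rightarrow> real"
  assumes s: "s \<ge> 0" and a: "a > -1" and f: "\<And>k. f k \<ge> 0"
    and G: "\<And>i. ((\<lambda>j. qN a i j * f (i + j)) has_sum G i) UNIV"
    and V: "((\<lambda>i. wP s i * G i) has_sum V) UNIV"
  shows "(\<lambda>k. pK a s k * f k) sums V"
proof -
  define b where "b = (\<lambda>(i,j). wP s i * (qN a i j * f (i + j)))"
  have b1: "((\<lambda>j. b (i, j)) has_sum (wP s i * G i)) UNIV" for i
    unfolding b_def using has_sum_cmult_right[OF G[of i], of "wP s i"] by simp
  have bnn: "b (i,j) \<ge> 0" for i j unfolding b_def
    using wP_nonneg[OF s] qN_nonneg[OF a] f by (simp add: mult_nonneg_nonneg)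
  have "b summable_on Sigma UNIV (\<lambda>_. UNIV)"
    by (rule summable_on_SigmaI[OF b1 has_sum_imp_summable[OF V]]) (use bnn in auto)
  hence bs: "(b has_sum V) (Sigma UNIV (\<lambda>_. UNIV))"
    by (rule has_sum_SigmaI[OF b1 V])
  define h where "h = (\<lambda>(k::nat, i::nat). (i, k - i))"
  have bij: "bij_betw h (Sigma UNIV (\<lambda>k. {..k})) (Sigma UNIV (\<lambda>_. UNIV))"
  proof (rule bij_betw_byWitness[where f' = "\<lambda>(i::nat,j::nat). (i + j, i)"])
    show "\<forall>a\<in>Sigma UNIV (\<lambda>k. {..k}). (\<lambda>(i::nat, j::nat). (i + j, i)) (h a) = a" by (auto simp: h_def)
    show "\<forall>a'\<in>Sigma UNIV (\<lambda>_. UNIV). h ((\<lambda>(i::nat, j::nat). (i + j, i)) a') = a'" by (auto simp: h_def)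
    show "h ` Sigma UNIV (\<lambda>k. {..k}) \<subseteq> Sigma UNIV (\<lambda>_. UNIV)" by auto
    show "(\<lambda>(i::nat, j::nat). (i + j, i)) ` Sigma UNIV (\<lambda>_. UNIV) \<subseteq> Sigma UNIV (\<lambda>k. {..k})" by auto
  qed
  have bh: "((\<lambda>y. b (h y)) has_sum V) (Sigma UNIV (\<lambda>k. {..k}))"
    by (subst has_sum_reindex_bij_betw[OF bij]) (rule bs)
  have inner:  "((\<lambda>i. b (h (k, i))) has_sum (pK a s k * f k)) {..k}" for k
  proof (rule has_sum_finiteI)
    show "pK a s k * f k = (\<Sum>i\<le>k. b (h (k, i)))"
      unfolding pK_def sum_distrib_right b_def h_def
      by (intro sum.cong refl) (simp add: mult.assoc)
  qed simp
  have "((\<lambda>k. pK a s k * f k) has_sum V) UNIV"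
    by (rule has_sum_SigmaD[OF bh inner])
  thus ?thesis by (rule has_sum_imp_sums)
qed


lemma outer_poly: "(\<lambda>i. wP s i * (cA + cB * of_nat i + cC * (of_nat i)^2)) sums (cA + cB * s + cC* (s^2+s))"
proof -
  have "(\<lambda>i. exp (-s) * (cA * (s^i / fact i) + cB * (of_nat i * (s^i / fact i)) + cC * ((of_nat i)^2 * (s^i / fact i))))
     sums (exp (-s) * (cA * exp s + cB * (s * exp s) + cC * ((s^2 + s) * exp s)))"
    by (intro sums_mult sums_add pois0 pois1 pois2)
  moreover have "exp (-s) * (cA * exp s + cB * (s * exp s) + cC * ((s^2 + s) * exp s)) = cA + cB * s + cC* (s^2+s)"
  proof -
    have "exp (-s) * exp s = 1" by (simp add: exp_minus field_simps)
    thus ?thesis by (simp add: algebra_simps)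
  qed
  moreover have "exp (-s) * (cA * (s^i / fact i) + cB * (of_nat i * (s^i / fact i)) + cC * ((of_nat i)^2 * (s^i / fact i)))
      = wP s i * (cA + cB * of_nat i + cC * (of_nat i)^2)" for i
    unfolding wP_def by (simp add: algebra_simps)
  ultimately show ?thesis by (metis (no_types, lifting) sums_cong)
qed

lemma inner_poly:
  fixes a :: real and i :: nat
  defines "c \<equiv> of_nat i + a + 1"
  shows "(\<lambda>j. qN a i j * (cA + cB * of_nat (i+j) + cC * (of_nat (i+j))^2))
     sums (cA + cB * of_nat i + cC * (of_nat i)^2 + (cB + 2* cC* of_nat i) * c + cC* c* (c+2))"
proof -
  have "(\<lambda>j. 2 powr (-c) * ((cA + cB * of_nat i + cC * (of_nat i)^2) * (nb c j * (1/2)^j)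
        + (cB + 2* cC* of_nat i) * (of_nat j * nb c j * (1/2)^j) + cC * ((of_nat j)^2 * nb c j * (1/2)^j)))
     sums (2 powr (-c) * ((cA + cB * of_nat i + cC * (of_nat i)^2) * 2 powr c
        + (cB + 2* cC* of_nat i) * (c * 2 powr c) + cC * (c * (c+2) * 2 powr c)))"
    by (intro sums_mult sums_add nb_sums0 nb_sums1 nb_sums2)
  moreover have "2 powr (-c) * ((cA + cB * of_nat i + cC * (of_nat i)^2) * 2 powr c
        + (cB + 2* cC* of_nat i) * (c * 2 powr c) + cC * (c * (c+2) * 2 powr c))
      = cA + cB * of_nat i + cC * (of_nat i)^2 + (cB + 2* cC* of_nat i) * c + cC* c* (c+2)"
  proof -
    have "2 powr (-c) * 2 powr c = 1" by (simp add: powr_minus field_simps)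
    thus ?thesis by (simp add: algebra_simps)
  qed
  moreover have "2 powr (-c) * ((cA + cB * of_nat i + cC * (of_nat i)^2) * (nb c j * (1/2)^j)
        + (cB + 2* cC* of_nat i) * (of_nat j * nb c j * (1/2)^j) + cC * ((of_nat j)^2 * nb c j * (1/2)^j))
      = qN a i j * (cA + cB * of_nat (i+j) + cC * (of_nat (i+j))^2)" for j
    unfolding qN_def c_def[symmetric] by (simp add: algebra_simps power2_eq_square)
  ultimately show ?thesis by (metis (no_types, lifting) sums_cong)
qed

lemma pK_poly:
  assumes a: "a > -1" and s: "s \<ge> 0" and ABC: "cA \<ge> 0" "cB \<ge> 0" "cC \<ge> 0"
  shows "(\<lambda>k. pK a s k * (cA + cB * of_nat k + cC * (of_nat k)^2))
     sums (cA + cB* (a+1+2* s) + cC* (4* s^2 + s* (4* a+10) + (a+1)* (a+3)))"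
proof (rule double_sum[OF s a])
  show "0 \<le> cA + cB * of_nat k + cC * (of_nat k)^2" for k using ABC by simp
  define G where "G = (\<lambda>i. cA + cB * of_nat i + cC * (of_nat i)^2 + (cB + 2* cC* of_nat i) * (of_nat i + a + 1)
        + cC* (of_nat i + a + 1)* ((of_nat i + a + 1)+2))"
  show "((\<lambda>j. qN a i j * (cA + cB * of_nat (i+j) + cC * (of_nat (i+j))^2)) has_sum G i) UNIV" for i
    unfolding G_def
    by (rule sums_nonneg_imp_has_sum[OF inner_poly])
       (use qN_nonneg[OF a] ABC in \<open>auto intro!: mult_nonneg_nonneg add_nonneg_nonneg\<close>)
  have G: "G i = (cA + cB* (a+1) + cC* (a+1)* (a+3)) + (2* cB + cC* (4* a+6)) * of_nat i + (4* cC) * (of_nat i)^2" for i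
    unfolding G_def by (simp add: algebra_simps power2_eq_square)
  have "(\<lambda>i. wP s i * G i) sums (cA + cB* (a+1+2* s) + cC* (4* s^2 + s* (4* a+10) + (a+1)* (a+3)))"
    unfolding G using outer_poly[of s "cA + cB* (a+1) + cC* (a+1)* (a+3)" "2* cB + cC* (4* a+6)" "4* cC"]
    by (simp add: algebra_simps power2_eq_square)
  moreover have "G i \<ge> 0" for i
  proof -
    have P: "0 \<le> cA + cB * of_nat i + cC * (of_nat i)^2 + (cB + 2 * cC * of_nat i) * c + cC * c * (c+2)"
      if "c > 0" for c using ABC that by (intro add_nonneg_nonneg mult_nonneg_nonneg) auto
    have "of_nat i + a + 1 > 0" using a by linarith
    from P[OF this] show ?thesis unfolding G_def .
  qed
  ultimately show "((\<lambda>i. wP s i * G i) has_sum (cA + cB* (a+1+2* s) + cC* (4* s^2 + s* (4* a+10) + (a+1)* (a+3)))) UNIV"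
    using wP_nonneg[OF s] by (intro sums_nonneg_imp_has_sum) auto
qed


lemma p_basis_eq: "p_basis \<alpha> \<eta> k x = pK \<alpha> (\<eta> * x / 2) k"
proof -
  define s where "s = \<eta> * x / 2"
  have "-\<eta> * x / 2 = -s" unfolding s_def by simp
  have tm: "exp (-s) * 2 powr (-\<alpha> - 1) * 2 powr (- real k) *
      ((-1)^i / fact i * ((real k + \<alpha>) gchoose (k - i)) * (-s)^i)
     = wP s i * qN \<alpha> i (k - i)" if "i \<le> k" for i
  proof -
    have 1: "(-1::real)^i * (-s)^i = s^i"
      by (metis mult_minus1 power_mult_distrib mult_1 neg_one_even_power neg_one_odd_power
          minus_mult_minus power_minus)
    have 2: "nb (real i + \<alpha> + 1) (k - i) = ((real k + \<alpha>) gchoose (k - i))"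
      unfolding nb_def using that by (simp add: of_nat_diff)
    have 3: "2 powr (-\<alpha> - 1) * 2 powr (- real k) = 2 powr (-(real i + \<alpha> + 1)) * (1/2::real)^(k - i)"
    proof -
      have "(1/2::real)^(k-i) = 2 powr (-(real (k - i)))"
        by (simp add: powr_minus powr_realpow power_one_over inverse_eq_divide)
      hence "2 powr (-(real i + \<alpha> + 1)) * (1/2::real)^(k - i) = 2 powr (-(real i + \<alpha> + 1) + -(real (k-i)))"
        by (simp only: powr_add)
      also have "-(real i + \<alpha> + 1) + -(real (k-i)) = (-\<alpha> - 1) + (- real k)"
        using that by (simp add: of_nat_diff)
      finally show ?thesis by (simp only: powr_add)
    qed
    have gen: "e * P1 * P2 * ((m / f) * G * t) = (e * u / f) * (Q * G * h)"
      if "P1 * P2 = Q * h" "m * t = u" for e P1 P2 m f G t u Q h :: real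
    proof -
      have "e * P1 * P2 * ((m / f) * G * t) = e * (P1 * P2) * (m * t) * G / f" by simp
      also have "\<dots> = (e * u / f) * (Q * G * h)" unfolding that by simp
      finally show ?thesis .
    qed
    show ?thesis unfolding wP_def qN_def 2
      by (rule gen[OF 3 1])
  qed
  have "p_basis \<alpha> \<eta> k x = (\<Sum>i=0..k. exp (-s) * 2 powr (-\<alpha> - 1) * 2 powr (- real k) *
      ((-1)^i / fact i * ((real k + \<alpha>) gchoose (k - i)) * (-s)^i))"
    unfolding p_basis_def laguerre_def sum_distrib_left \<open>-\<eta> * x / 2 = -s\<close>
    by (simp add: s_def algebra_simps)
  also have "\<dots> = (\<Sum>i\<le>k. wP s i * qN \<alpha> i (k - i))"
    using tm by (simp add: atMost_atLeast0)
  finally show ?thesis unfolding pK_def s_def .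
qed


lemma Ioi_leb: "{(0::real)<..} \<in> sets lebesgue"
  by (rule sets_completionI_sets) simp

lemma gamma_int_pos:
  assumes "\<nu> > (0::real)"
  shows "((\<lambda>t. t powr (\<nu> - 1) / exp t) has_integral Gamma \<nu>) {0<..}"
proof -
  have "((\<lambda>t. t powr (\<nu> - 1) / exp t) has_integral Gamma \<nu>) {0..}"
    by (rule Gamma_integral_real) fact
  hence "((\<lambda>t. if t \<in> {0<..} then t powr (\<nu> - 1) / exp t else 0) has_integral Gamma \<nu>) {0..}"
    by (rule has_integral_spike [of "{0}", rotated 2]) auto
  also have "?this = ?thesis"
    by (subst has_integral_restrict) auto
  finally show ?thesis .
qed

lemma kernel_moment:
  assumes b: "\<beta> > 0" and e: "\<eta> > 0" and k: "k > 0"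
  shows "((\<lambda>z. I_kernel \<beta> \<eta> k z * z^m) has_integral
           Gamma (real k * \<beta> + real m) / (Gamma (real k * \<beta>) * (\<eta> * \<beta>)^m)) {0<..}"
proof -
  define r where "r = \<eta> * \<beta>"
  define \<nu> where "\<nu> = real k * \<beta>"
  have r: "r > 0" unfolding r_def using b e by simp
  have nu: "\<nu> > 0" unfolding \<nu>_def using b k by simp
  define f where "f = (\<lambda>t::real. t powr (\<nu> + real m - 1) / exp t)"
  have fi: "(f has_integral Gamma (\<nu> + real m)) {0<..}"
    unfolding f_def by (rule gamma_int_pos) (use nu in simp)
  have fa: "f absolutely_integrable_on {0<..}"
    by (rule nonnegative_absolutely_integrable_1) (use fi in \<open>auto simp: f_def has_integral_integrable\<close>)
  have img: "(\<lambda>z. r * z) ` {0<..} = {0<..}"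
  proof (intro set_eqI iffI)
    fix y :: real assume "y \<in> {0<..}"
    thus "y \<in> (\<lambda>z. r * z) ` {0<..}" using r by (intro image_eqI[of _ _ "y / r"]) auto
  qed (use r in auto)
  have "(\<lambda>z. \<bar>r\<bar> * f (r * z)) absolutely_integrable_on {0<..} \<and>
          integral {0<..} (\<lambda>z. \<bar>r\<bar> * f (r * z)) = Gamma (\<nu> + real m)"
  proof (subst has_absolute_integral_change_of_variables_1'[where g = "\<lambda>z. r * z" and g' = "\<lambda>_. r"])
    show "{(0::real)<..} \<in> sets lebesgue" by (rule Ioi_leb)
    show "((\<lambda>z. r * z) has_field_derivative r) (at x within {0<..})" for x
      by (auto intro!: derivative_eq_intros)
    show "inj_on ((*) r) {0<..}" using r by (auto simp: inj_on_def)
    show "f absolutely_integrable_on (*) r ` {0<..} \<and> integral ((*) r ` {0<..}) f = Gamma (\<nu> + real m)"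
      using img fa fi by (simp add: integral_unique)
  qed
  hence A: "((\<lambda>z. \<bar>r\<bar> * f (r * z)) has_integral Gamma (\<nu> + real m)) {0<..}"
    using set_lebesgue_integral_eq_integral absolutely_integrable_on_def
    by (metis has_integral_integrable_integral)
  have eq: "I_kernel \<beta> \<eta> k z * z^m = (\<bar>r\<bar> * f (r * z)) / (Gamma \<nu> * r^m)" if "z \<in> {0<..}" for z
  proof -
    have z: "z > 0" using that by simp
    have "(r * z) powr (\<nu> + real m - 1) = (r * z) powr (\<nu> - 1) * (r * z)^m"
    proof -
      have "(r * z)^m = (r * z) powr (real m)" using r z by (simp add: powr_realpow)
      moreover have "\<nu> + real m - 1 = (\<nu> - 1) + real m" by simp
      ultimately show ?thesis by (simp only: powr_add)
    qed
    thus ?thesis unfolding I_kernel_def f_def r_def[symmetric] \<nu>_def[symmetric]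
      using r z by (simp add: field_simps exp_minus power_mult_distrib r_def)
  qed
  have "((\<lambda>z. (\<bar>r\<bar> * f (r * z)) / (Gamma \<nu> * r^m)) has_integral Gamma (\<nu> + real m) / (Gamma \<nu> * r^m)) {0<..}"
    using has_integral_divide[OF A] by simp
  thus ?thesis unfolding r_def[symmetric] \<nu>_def[symmetric]
    by (rule has_integral_eq[rotated]) (use eq in auto)
qed


context
  fixes \<beta> \<eta> :: real and k :: nat
  assumes b: "\<beta> > 0" and e: "\<eta> > 0" and k: "k > 0"
begin

lemma I_nonneg: "z > 0 \<Longrightarrow> I_kernel \<beta> \<eta> k z \<ge> 0"
  unfolding I_kernel_def using b e k by (intro divide_nonneg_pos mult_nonneg_nonneg) auto

lemma I_cont: "continuous_on {0<..} (I_kernel \<beta> \<eta> k)"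
proof -
  have "Gamma (real k * \<beta>) > 0" using b k by simp
  thus ?thesis unfolding I_kernel_def[abs_def] using b e
    by (intro continuous_intros continuous_on_powr') auto
qed

lemma K0: "((\<lambda>z. I_kernel \<beta> \<eta> k z) has_integral 1) {0<..}"
proof -
  have "Gamma (real k * \<beta>) > 0" using b k by simp
  thus ?thesis using kernel_moment[OF b e k, of 0] by simp
qed

lemma K1: "((\<lambda>z. I_kernel \<beta> \<eta> k z * z) has_integral (real k / \<eta>)) {0<..}"
proof -
  have nu: "real k * \<beta> > 0" using b k by simp
  hence G: "Gamma (real k * \<beta> + 1) = real k * \<beta> * Gamma (real k * \<beta>)"
    by (intro Gamma_plus1) (auto dest: nonpos_Ints_nonpos)
  have "Gamma (real k * \<beta>) > 0" using nu by simp
  hence "Gamma (real k * \<beta> + real 1) / (Gamma (real k * \<beta>) * (\<eta> * \<beta>) ^ 1) = real k / \<eta>"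
    using G b e by (simp add: field_simps)
  thus ?thesis using kernel_moment[OF b e k, of 1] by simp
qed

lemma K2: "((\<lambda>z. I_kernel \<beta> \<eta> k z * z^2) has_integral ((real k ^ 2 + real k / \<beta>) / \<eta>^2)) {0<..}"
proof -
  have nu: "real k * \<beta> > 0" using b k by simp
  hence G1: "Gamma (real k * \<beta> + 1) = real k * \<beta> * Gamma (real k * \<beta>)"
    by (intro Gamma_plus1) (auto dest: nonpos_Ints_nonpos)
  have nu1: "real k * \<beta> + 1 > 0" using nu by simp
  hence G2: "Gamma (real k * \<beta> + 1 + 1) = (real k * \<beta> + 1) * Gamma (real k * \<beta> + 1)"
    by (intro Gamma_plus1) (auto dest: nonpos_Ints_nonpos)
  have "Gamma (real k * \<beta>) > 0" using nu by simp
  moreover have "real k * \<beta> + real 2 = real k * \<beta> + 1 + 1" by simp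
  ultimately have "Gamma (real k * \<beta> + real 2) / (Gamma (real k * \<beta>) * (\<eta> * \<beta>) ^ 2) = (real k ^ 2 + real k / \<beta>) / \<eta>^2"
    using G1 G2 b e by (simp add: field_simps power2_eq_square)
  thus ?thesis using kernel_moment[OF b e k, of 2] by simp
qed

lemma int_dom:
  assumes fc: "continuous_on {0<..} f" and fb: "\<And>z. z > 0 \<Longrightarrow> \<bar>f z\<bar> \<le> A + B * z^2"
  shows "(\<lambda>z. I_kernel \<beta> \<eta> k z * f z) integrable_on {0<..}"
proof -
  have "(\<lambda>z. I_kernel \<beta> \<eta> k z * f z) absolutely_integrable_on {0<..}"
  proof (rule measurable_bounded_by_integrable_imp_absolutely_integrable)
    show "(\<lambda>z. I_kernel \<beta> \<eta> k z * f z) \<in> borel_measurable (lebesgue_on {0<..})"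
      by (rule continuous_imp_measurable_on_sets_lebesgue[OF continuous_on_mult[OF I_cont fc] Ioi_leb])
    show "{(0::real)<..} \<in> sets lebesgue" by (rule Ioi_leb)
    have "((\<lambda>z. A * I_kernel \<beta> \<eta> k z + B * (I_kernel \<beta> \<eta> k z * z^2)) has_integral
            (A * 1 + B * ((real k ^ 2 + real k / \<beta>) / \<eta>^2))) {0<..}"
      by (intro has_integral_add has_integral_mult_right K0 K2)
    thus "(\<lambda>z. A * I_kernel \<beta> \<eta> k z + B * (I_kernel \<beta> \<eta> k z * z^2)) integrable_on {0<..}"
      by blast
    fix z :: real assume z: "z \<in> {0<..}"
    have "norm (I_kernel \<beta> \<eta> k z * f z) = I_kernel \<beta> \<eta> k z * \<bar>f z\<bar>"
      using I_nonneg[of z] z by (simp add: abs_mult)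
    also have "\<dots> \<le> I_kernel \<beta> \<eta> k z * (A + B * z^2)"
      using I_nonneg[of z] z fb[of z] by (intro mult_left_mono) auto
    finally show "norm (I_kernel \<beta> \<eta> k z * f z) \<le> A * I_kernel \<beta> \<eta> k z + B * (I_kernel \<beta> \<eta> k z * z^2)"
      by (simp add: algebra_simps)
  qed
  thus ?thesis by (simp add: absolutely_integrable_on_def)
qed

end


definition EE :: "real \<Rightarrow> real \<Rightarrow> (real \<Rightarrow> real) \<Rightarrow> nat \<Rightarrow> real" where
  "EE \<beta> \<eta> f k = (if k = 0 then f 0 else integral {0<..} (\<lambda>z. I_kernel \<beta> \<eta> k z * f z))"

lemma per_k:
  assumes b: "\<beta> > 0" and e: "\<eta> > 0" and x: "x \<ge> 0"
    and \<Phi>c: "continuous_on {0..} \<Phi>" and gc: "continuous_on {0..} g"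
    and Wp: "\<And>y. y \<ge> 0 \<Longrightarrow> \<bar>\<Phi> y - g y\<bar> \<le> Wp"
    and L: "\<And>t. t \<ge> 0 \<Longrightarrow> \<bar>g t - g x - D * (t - x)\<bar> \<le> L * (t - x)^2" and L0: "L \<ge> 0"
  defines "\<psi> \<equiv> (\<lambda>z. \<Phi> z - g z)" and "rem \<equiv> (\<lambda>z. g z - g x - D * (z - x))"
  shows "EE \<beta> \<eta> \<Phi> k = EE \<beta> \<eta> \<psi> k + g x + D * (real k / \<eta> - x) + EE \<beta> \<eta> rem k"
    and "\<bar>EE \<beta> \<eta> \<psi> k\<bar> \<le> Wp"
    and "\<bar>EE \<beta> \<eta> rem k\<bar> \<le> L * ((real k ^ 2 + real k / \<beta>) / \<eta>^2 - 2 * x * (real k / \<eta>) + x^2)"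
proof -
  have "(\<bar>\<Phi> 0 - g 0\<bar> \<le> Wp)" using Wp by simp
  have "EE \<beta> \<eta> \<Phi> k = EE \<beta> \<eta> \<psi> k + g x + D * (real k / \<eta> - x) + EE \<beta> \<eta> rem k \<and>
       \<bar>EE \<beta> \<eta> \<psi> k\<bar> \<le> Wp \<and>
       \<bar>EE \<beta> \<eta> rem k\<bar> \<le> L * ((real k ^ 2 + real k / \<beta>) / \<eta>^2 - 2 * x * (real k / \<eta>) + x^2)"
  proof (cases "k = 0")
    case True
    have "\<bar>rem 0\<bar> \<le> L * (0 - x)^2" unfolding rem_def using L[of 0] by simp
    thus ?thesis using True Wp[of 0] unfolding EE_def \<psi>_def rem_def by (simp add: algebra_simps)
  next
    case False
    hence k: "k > 0" by simp
    note I0 = I_nonneg[OF b e k]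
    have \<psi>c: "continuous_on {0<..} \<psi>" unfolding \<psi>_def
      by (intro continuous_intros continuous_on_subset[OF \<Phi>c] continuous_on_subset[OF gc]) auto
    have rc: "continuous_on {0<..} rem" unfolding rem_def
      by (intro continuous_intros continuous_on_subset[OF gc]) auto
    have \<psi>i: "(\<lambda>z. I_kernel \<beta> \<eta> k z * \<psi> z) integrable_on {0<..}"
      by (rule int_dom[OF b e k \<psi>c, of Wp 0]) (use Wp in \<open>auto simp: \<psi>_def\<close>)
    have remb: "\<bar>rem z\<bar> \<le> (2 * L * x^2) + (2 * L) * z^2" if "z > 0" for z
    proof -
      have "\<bar>rem z\<bar> \<le> L * (z - x)^2" unfolding rem_def using L[of z] that by simp
      also have "\<dots> \<le> L * (2 * x^2 + 2 * z^2)"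
      proof (rule mult_left_mono[OF _ L0])
        have "2 * x^2 + 2 * z^2 - (z - x)^2 = (x + z)^2" by (simp add: power2_eq_square algebra_simps)
        thus "(z - x)^2 \<le> 2 * x^2 + 2 * z^2" by (metis diff_ge_0_iff_ge zero_le_power2)
      qed
      finally show ?thesis by (simp add: algebra_simps)
    qed
    have ri: "(\<lambda>z. I_kernel \<beta> \<eta> k z * rem z) integrable_on {0<..}"
      by (rule int_dom[OF b e k rc remb])
    have h\<psi>: "((\<lambda>z. I_kernel \<beta> \<eta> k z * \<psi> z) has_integral EE \<beta> \<eta> \<psi> k) {0<..}"
      using \<psi>i k by (simp add: EE_def has_integral_integral)
    have hr: "((\<lambda>z. I_kernel \<beta> \<eta> k z * rem z) has_integral EE \<beta> \<eta> rem k) {0<..}"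
      using ri k by (simp add: EE_def has_integral_integral)
    have "((\<lambda>z. I_kernel \<beta> \<eta> k z * \<psi> z + (g x * I_kernel \<beta> \<eta> k z +
              D * (I_kernel \<beta> \<eta> k z * z - x * I_kernel \<beta> \<eta> k z)) + I_kernel \<beta> \<eta> k z * rem z)
          has_integral (EE \<beta> \<eta> \<psi> k + (g x * 1 + D * (real k / \<eta> - x * 1)) + EE \<beta> \<eta> rem k)) {0<..}"
      by (intro has_integral_add has_integral_mult_right has_integral_diff h\<psi> hr K0[OF b e k] K1[OF b e k])
    moreover have "I_kernel \<beta> \<eta> k z * \<psi> z + (g x * I_kernel \<beta> \<eta> k z +
              D * (I_kernel \<beta> \<eta> k z * z - x * I_kernel \<beta> \<eta> k z)) + I_kernel \<beta> \<eta> k z * rem z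
           = I_kernel \<beta> \<eta> k z * \<Phi> z" for z
      unfolding \<psi>_def rem_def by (simp add: algebra_simps)
    ultimately have "((\<lambda>z. I_kernel \<beta> \<eta> k z * \<Phi> z) has_integral
          (EE \<beta> \<eta> \<psi> k + (g x * 1 + D * (real k / \<eta> - x * 1)) + EE \<beta> \<eta> rem k)) {0<..}"
      by simp
    hence 1: "EE \<beta> \<eta> \<Phi> k = EE \<beta> \<eta> \<psi> k + g x + D * (real k / \<eta> - x) + EE \<beta> \<eta> rem k"
      using k unfolding EE_def[of _ _ \<Phi>] by (simp add: integral_unique)
    have "norm (integral {0<..} (\<lambda>z. I_kernel \<beta> \<eta> k z * \<psi> z)) \<le> integral {0<..} (\<lambda>z. Wp * I_kernel \<beta> \<eta> k z)"
    proof (rule integral_norm_bound_integral[OF \<psi>i])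
      show "(\<lambda>z. Wp * I_kernel \<beta> \<eta> k z) integrable_on {0<..}"
        using has_integral_mult_right[OF K0[OF b e k]] by blast
      fix z :: real assume z: "z \<in> {0<..}"
      have "norm (I_kernel \<beta> \<eta> k z * \<psi> z) = I_kernel \<beta> \<eta> k z * \<bar>\<psi> z\<bar>"
        using I0[of z] z by (simp add: abs_mult)
      also have "\<dots> \<le> I_kernel \<beta> \<eta> k z * Wp"
        using I0[of z] z Wp[of z] by (intro mult_left_mono) (auto simp: \<psi>_def)
      finally show "norm (I_kernel \<beta> \<eta> k z * \<psi> z) \<le> Wp * I_kernel \<beta> \<eta> k z" by (simp add: mult.commute)
    qed
    also have "integral {0<..} (\<lambda>z. Wp * I_kernel \<beta> \<eta> k z) = Wp"
      using has_integral_mult_right[OF K0[OF b e k], of Wp] by (metis integral_unique mult_1_right)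
    finally have 2: "\<bar>EE \<beta> \<eta> \<psi> k\<bar> \<le> Wp" using k by (simp add: EE_def)
    define M where "M = (real k ^ 2 + real k / \<beta>) / \<eta>^2 - 2 * x * (real k / \<eta>) + x^2"
    have hM: "((\<lambda>z. L * (I_kernel \<beta> \<eta> k z * z^2) - (L * (2 * x)) * (I_kernel \<beta> \<eta> k z * z) + (L * x^2) * I_kernel \<beta> \<eta> k z)
        has_integral (L * ((real k ^ 2 + real k / \<beta>) / \<eta>^2) - (L * (2 * x)) * (real k / \<eta>) + (L * x^2) * 1)) {0<..}"
      by (intro has_integral_add has_integral_diff has_integral_mult_right K0[OF b e k] K1[OF b e k] K2[OF b e k])
    have "norm (integral {0<..} (\<lambda>z. I_kernel \<beta> \<eta> k z * rem z)) \<le>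
          integral {0<..} (\<lambda>z. L * (I_kernel \<beta> \<eta> k z * z^2) - (L * (2 * x)) * (I_kernel \<beta> \<eta> k z * z) + (L * x^2) * I_kernel \<beta> \<eta> k z)"
    proof (rule integral_norm_bound_integral[OF ri])
      show "(\<lambda>z. L * (I_kernel \<beta> \<eta> k z * z^2) - (L * (2 * x)) * (I_kernel \<beta> \<eta> k z * z) + (L * x^2) * I_kernel \<beta> \<eta> k z) integrable_on {0<..}"
        using hM by blast
      fix z :: real assume z: "z \<in> {0<..}"
      have "norm (I_kernel \<beta> \<eta> k z * rem z) = I_kernel \<beta> \<eta> k z * \<bar>rem z\<bar>"
        using I0[of z] z by (simp add: abs_mult)
      also have "\<dots> \<le> I_kernel \<beta> \<eta> k z * (L * (z - x)^2)"
        using I0[of z] z L[of z] by (intro mult_left_mono) (auto simp: rem_def)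
      also have "\<dots> = L * (I_kernel \<beta> \<eta> k z * z^2) - (L * (2 * x)) * (I_kernel \<beta> \<eta> k z * z) + (L * x^2) * I_kernel \<beta> \<eta> k z"
        by (simp add: power2_eq_square algebra_simps)
      finally show "norm (I_kernel \<beta> \<eta> k z * rem z) \<le> \<dots>" .
    qed
    also have "\<dots> = L * M"
      using hM by (simp add: integral_unique M_def algebra_simps)
    finally have 3: "\<bar>EE \<beta> \<eta> rem k\<bar> \<le> L * M" using k by (simp add: EE_def)
    show ?thesis using 1 2 3 unfolding M_def by blast
  qed
  thus "EE \<beta> \<eta> \<Phi> k = EE \<beta> \<eta> \<psi> k + g x + D * (real k / \<eta> - x) + EE \<beta> \<eta> rem k"
    and "\<bar>EE \<beta> \<eta> \<psi> k\<bar> \<le> Wp"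
    and "\<bar>EE \<beta> \<eta> rem k\<bar> \<le> L * ((real k ^ 2 + real k / \<beta>) / \<eta>^2 - 2 * x * (real k / \<eta>) + x^2)"
    by blast+
qed


lemma weight_sums:
  assumes a: "\<alpha> > -1" and b: "\<beta> > 0" and e: "\<eta> > 0" and x: "x \<ge> 0"
  defines "P \<equiv> (\<lambda>k. p_basis \<alpha> \<eta> k x)"
  shows "P sums 1" and "(\<lambda>k. P k * (real k / \<eta> - x)) sums ((1 + \<alpha>) / \<eta>)"
    and "(\<lambda>k. P k * ((real k ^ 2 + real k / \<beta>) / \<eta>^2 - 2 * x * (real k / \<eta>) + x^2)) sums mu2 \<alpha> \<beta> \<eta> x"
    and "\<And>k. P k \<ge> 0"
proof -
  define s where "s = \<eta> * x / 2"
  have s: "s \<ge> 0" using e x by (simp add: s_def)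
  have PK: "P = (\<lambda>k. pK \<alpha> s k)" unfolding P_def s_def by (simp add: p_basis_eq)
  show "P k \<ge> 0" for k unfolding PK by (rule pK_nonneg[OF a s])
  have S0: "P sums 1" using pK_poly[OF a s, of 1 0 0] unfolding PK by simp
  have S1: "(\<lambda>k. P k * real k) sums (\<alpha> + 1 + 2 * s)" using pK_poly[OF a s, of 0 1 0] unfolding PK by simp
  have S2: "(\<lambda>k. P k * (real k)^2) sums (4 * s^2 + s * (4 * \<alpha> + 10) + (\<alpha> + 1) * (\<alpha> + 3))"
    using pK_poly[OF a s, of 0 0 1] unfolding PK by simp
  show "P sums 1" by (rule S0)
  have "(\<lambda>k. (1/\<eta>) * (P k * real k) - x * P k) sums ((1/\<eta>) * (\<alpha> + 1 + 2 * s) - x * 1)"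
    by (intro sums_diff sums_mult S0 S1)
  moreover have "(1/\<eta>) * (\<alpha> + 1 + 2 * s) - x * 1 = (1 + \<alpha>) / \<eta>"
    using e by (simp add: s_def field_simps)
  moreover have "(1/\<eta>) * (P k * real k) - x * P k = P k * (real k / \<eta> - x)" for k
    by (simp add: algebra_simps)
  ultimately show "(\<lambda>k. P k * (real k / \<eta> - x)) sums ((1 + \<alpha>) / \<eta>)"
    by (metis (no_types, lifting) sums_cong)
  have "(\<lambda>k. (1/\<eta>^2) * (P k * (real k)^2) + (1/(\<beta> * \<eta>^2) - 2 * x / \<eta>) * (P k * real k) + x^2 * P k)
     sums ((1/\<eta>^2) * (4 * s^2 + s * (4 * \<alpha> + 10) + (\<alpha> + 1) * (\<alpha> + 3)) +
           (1/(\<beta> * \<eta>^2) - 2 * x / \<eta>) * (\<alpha> + 1 + 2 * s) + x^2 * 1)"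
    by (intro sums_add sums_mult S0 S1 S2)
  moreover have "(1/\<eta>^2) * (4 * s^2 + s * (4 * \<alpha> + 10) + (\<alpha> + 1) * (\<alpha> + 3)) +
           (1/(\<beta> * \<eta>^2) - 2 * x / \<eta>) * (\<alpha> + 1 + 2 * s) + x^2 * 1 = mu2 \<alpha> \<beta> \<eta> x"
    using e b unfolding mu2_def s_def by (simp add: field_simps power2_eq_square)
  moreover have "(1/\<eta>^2) * (P k * (real k)^2) + (1/(\<beta> * \<eta>^2) - 2 * x / \<eta>) * (P k * real k) + x^2 * P k
      = P k * ((real k ^ 2 + real k / \<beta>) / \<eta>^2 - 2 * x * (real k / \<eta>) + x^2)" for k
    using e b by (simp add: field_simps power2_eq_square)
  ultimately show "(\<lambda>k. P k * ((real k ^ 2 + real k / \<beta>) / \<eta>^2 - 2 * x * (real k / \<eta>) + x^2)) sums mu2 \<alpha> \<beta> \<eta> x"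
    by (metis (no_types, lifting) sums_cong)
qed


lemma abs_suminf_le:
  fixes f g :: "nat \<Rightarrow> real"
  assumes "summable f" "g sums G" "\<And>k. \<bar>f k\<bar> \<le> g k"
  shows "\<bar>suminf f\<bar> \<le> G"
proof -
  have sg: "summable g" and Gs: "suminf g = G" using assms(2) by (auto simp: sums_iff)
  have fg: "- g n \<le> f n" "f n \<le> g n" for n using assms(3)[of n] by arith+
  have "suminf f \<le> suminf g" by (rule suminf_le) (use fg assms sg in auto)
  moreover have "suminf (\<lambda>k. - g k) \<le> suminf f"
    by (rule suminf_le) (use fg assms sg in \<open>auto simp: summable_minus\<close>)
  moreover have "suminf (\<lambda>k. - g k) = - suminf g" using sg by (rule suminf_minus)
  ultimately show ?thesis using Gs by (simp add: abs_le_iff)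
qed

lemma operator_bound:
  assumes a: "\<alpha> > -1" and b: "\<beta> > 0" and e: "\<eta> > 0" and x: "x \<ge> 0"
    and \<Phi>c: "continuous_on {0..} \<Phi>" and gc: "continuous_on {0..} g"
    and Wp: "\<And>y. y \<ge> 0 \<Longrightarrow> \<bar>\<Phi> y - g y\<bar> \<le> Wp"
    and L: "\<And>t. t \<ge> 0 \<Longrightarrow> \<bar>g t - g x - D * (t - x)\<bar> \<le> L * (t - x)^2" and L0: "L \<ge> 0"
  shows "\<bar>R_op \<alpha> \<beta> \<eta> \<Phi> x - \<Phi> x\<bar> \<le> 2 * Wp + L * (mu2 \<alpha> \<beta> \<eta> x + ((1 + \<alpha>) / \<eta>)^2)
            + \<bar>\<Phi> (x + (1 + \<alpha>) / \<eta>) - \<Phi> x\<bar>"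
proof -
  define P where "P = (\<lambda>k. p_basis \<alpha> \<eta> k x)"
  define \<psi> where "\<psi> = (\<lambda>z. \<Phi> z - g z)"
  define rem where "rem = (\<lambda>z. g z - g x - D * (z - x))"
  define M where "M = (\<lambda>k. (real k ^ 2 + real k / \<beta>) / \<eta>^2 - 2 * x * (real k / \<eta>) + x^2)"
  define c where "c = (1 + \<alpha>) / \<eta>"
  have c0: "c > 0" unfolding c_def using a e by simp
  note pk = per_k[OF b e x \<Phi>c gc Wp L L0, folded \<psi>_def rem_def]
  note ws = weight_sums[OF a b e x, folded P_def, folded M_def c_def]
  have F1: "EE \<beta> \<eta> \<Phi> k = EE \<beta> \<eta> \<psi> k + g x + D * (real k / \<eta> - x) + EE \<beta> \<eta> rem k" for k
    by (rule pk(1))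
  have F2: "\<bar>P k * EE \<beta> \<eta> \<psi> k\<bar> \<le> P k * Wp" for k
    using pk(2)[of k] ws(4)[of k] unfolding P_def by (simp add: abs_mult mult_left_mono)
  have F3: "\<bar>P k * EE \<beta> \<eta> rem k\<bar> \<le> L * (P k * M k)" for k
  proof -
    have "\<bar>P k * EE \<beta> \<eta> rem k\<bar> = P k * \<bar>EE \<beta> \<eta> rem k\<bar>"
      using ws(4)[of k] unfolding P_def by (simp add: abs_mult)
    also have "\<dots> \<le> P k * (L * M k)"
      using pk(3)[of k] ws(4)[of k] unfolding M_def P_def by (rule mult_left_mono)
    finally show ?thesis by (simp add: mult.left_commute)
  qed
  have gW: "(\<lambda>k. P k * Wp) sums (1 * Wp)" by (intro sums_mult2 ws(1))
  have ws2: "(\<lambda>k. P k * (real k / \<eta> - x)) sums c" using ws(2) unfolding P_def c_def by simp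
  have ws3: "(\<lambda>k. P k * M k) sums mu2 \<alpha> \<beta> \<eta> x" using ws(3) unfolding M_def P_def by simp
  have gL: "(\<lambda>k. L * (P k * M k)) sums (L * mu2 \<alpha> \<beta> \<eta> x)" by (intro sums_mult ws3)
  have s1: "summable (\<lambda>k. P k * EE \<beta> \<eta> \<psi> k)"
    by (rule summable_comparison_test[OF _ sums_summable[OF gW]]) (use F2 in auto)
  have s2: "summable (\<lambda>k. P k * EE \<beta> \<eta> rem k)"
    by (rule summable_comparison_test[OF _ sums_summable[OF gL]]) (use F3 in auto)
  define A1 where "A1 = suminf (\<lambda>k. P k * EE \<beta> \<eta> \<psi> k)"
  define A2 where "A2 = suminf (\<lambda>k. P k * EE \<beta> \<eta> rem k)"
  have A1b: "\<bar>A1\<bar> \<le> Wp" unfolding A1_def using abs_suminf_le[OF s1 gW F2] by simp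
  have A2b: "\<bar>A2\<bar> \<le> L * mu2 \<alpha> \<beta> \<eta> x" unfolding A2_def using abs_suminf_le[OF s2 gL F3] by simp
  have "(\<lambda>k. P k * EE \<beta> \<eta> \<psi> k + g x * P k + D * (P k * (real k / \<eta> - x)) + P k * EE \<beta> \<eta> rem k)
      sums (A1 + g x * 1 + D * c + A2)"
    unfolding A1_def A2_def
    by (intro sums_add sums_mult summable_sums s1 s2 ws(1) ws2)
  moreover have "P k * EE \<beta> \<eta> \<psi> k + g x * P k + D * (P k * (real k / \<eta> - x)) + P k * EE \<beta> \<eta> rem k
      = P k * EE \<beta> \<eta> \<Phi> k" for k
    unfolding F1 by (simp add: algebra_simps)
  ultimately have T: "(\<lambda>k. P k * EE \<beta> \<eta> \<Phi> k) sums (A1 + g x + D * c + A2)"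
    by simp
  hence "(\<lambda>k. P (Suc k) * EE \<beta> \<eta> \<Phi> (Suc k)) sums (A1 + g x + D * c + A2 - P 0 * EE \<beta> \<eta> \<Phi> 0)"
    by (subst sums_Suc_iff) simp
  hence "R_op \<alpha> \<beta> \<eta> \<Phi> x = A1 + g x + D * c + A2"
    unfolding R_op_def P_def EE_def by (simp add: sums_iff)
  moreover have "\<bar>\<psi> (x + c)\<bar> \<le> Wp" unfolding \<psi>_def using Wp[of "x + c"] x c0 by simp
  moreover have "\<bar>rem (x + c)\<bar> \<le> L * c^2" unfolding rem_def using L[of "x + c"] x c0 by simp
  moreover have "\<Phi> (x + c) = \<psi> (x + c) + rem (x + c) + g x + D * c"
    unfolding \<psi>_def rem_def by simp
  ultimately have "\<bar>R_op \<alpha> \<beta> \<eta> \<Phi> x - \<Phi> x\<bar> \<le> 2 * Wp + (L * mu2 \<alpha> \<beta> \<eta> x + L * c^2) + \<bar>\<Phi> (x + c) - \<Phi> x\<bar>"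
    using A1b A2b by (simp add: abs_le_iff) linarith
  thus ?thesis unfolding c_def by (simp add: algebra_simps)
qed


lemma taylor2_bound:
  fixes g g1 g2 :: "real \<Rightarrow> real"
  assumes d1: "\<And>z. min y t \<le> z \<Longrightarrow> z \<le> max y t \<Longrightarrow> (g has_real_derivative g1 z) (at z)"
    and d2: "\<And>z. min y t \<le> z \<Longrightarrow> z \<le> max y t \<Longrightarrow> (g1 has_real_derivative g2 z) (at z)"
    and bd: "\<And>z. min y t \<le> z \<Longrightarrow> z \<le> max y t \<Longrightarrow> \<bar>g2 z\<bar> \<le> L"
  shows "\<bar>g t - g y - g1 y * (t - y)\<bar> \<le> L * (t - y)^2"
proof (cases "y < t")
  case True
  obtain \<xi> where xi: "y < \<xi>" "\<xi> < t" "g t - g y = (t - y) * g1 \<xi>"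
    using MVT2[of y t g g1] d1 True by auto
  obtain \<zeta> where ze: "y < \<zeta>" "\<zeta> < \<xi>" "g1 \<xi> - g1 y = (\<xi> - y) * g2 \<zeta>"
    using MVT2[of y \<xi> g1 g2] d2 xi True by auto
  have "\<bar>g2 \<zeta>\<bar> \<le> L" using bd ze xi True by auto
  hence "\<bar>g1 \<xi> - g1 y\<bar> \<le> (t - y) * L"
    using ze xi by (simp add: abs_mult mult_mono)
  hence "\<bar>(t - y) * (g1 \<xi> - g1 y)\<bar> \<le> (t - y) * ((t - y) * L)"
    using True by (simp add: abs_mult mult_left_mono)
  moreover have "g t - g y - g1 y * (t - y) = (t - y) * (g1 \<xi> - g1 y)"
    using xi by (simp add: algebra_simps)
  ultimately show ?thesis by (simp add: power2_eq_square algebra_simps)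
next
  case False
  show ?thesis
  proof (cases "t = y")
    case True
    thus ?thesis by simp
  next
    case False2: False
    with False have ty: "t < y" by simp
    obtain \<xi> where xi: "t < \<xi>" "\<xi> < y" "g y - g t = (y - t) * g1 \<xi>"
      using MVT2[of t y g g1] d1 ty by auto
    obtain \<zeta> where ze: "\<xi> < \<zeta>" "\<zeta> < y" "g1 y - g1 \<xi> = (y - \<xi>) * g2 \<zeta>"
      using MVT2[of \<xi> y g1 g2] d2 xi ty by auto
    have "\<bar>g2 \<zeta>\<bar> \<le> L" using bd ze xi ty by auto
    hence "\<bar>g1 y - g1 \<xi>\<bar> \<le> (y - t) * L"
      using ze xi by (simp add: abs_mult mult_mono)
    hence "\<bar>(y - t) * (g1 y - g1 \<xi>)\<bar> \<le> (y - t) * ((y - t) * L)"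
      using ty by (simp add: abs_mult mult_left_mono)
    moreover have "g t - g y - g1 y * (t - y) = (y - t) * (g1 y - g1 \<xi>)"
      using xi by (simp add: algebra_simps)
    ultimately show ?thesis by (simp add: power2_eq_square algebra_simps)
  qed
qed


definition PP :: "(real \<Rightarrow> real) \<Rightarrow> real \<Rightarrow> real" where "PP F z = integral {-2..z} F"
definition UU :: "(real \<Rightarrow> real) \<Rightarrow> real \<Rightarrow> real \<Rightarrow> real" where "UU F b y = (PP F (y+b) - PP F y) / b"
definition QQ :: "(real \<Rightarrow> real) \<Rightarrow> real \<Rightarrow> real \<Rightarrow> real" where "QQ F b z = integral {-1..z} (UU F b)"
definition TT :: "(real \<Rightarrow> real) \<Rightarrow> real \<Rightarrow> real \<Rightarrow> real" where "TT F b y = (QQ F b (y+b) - QQ F b y) / b"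
definition T1 :: "(real \<Rightarrow> real) \<Rightarrow> real \<Rightarrow> real \<Rightarrow> real" where "T1 F b y = (UU F b (y+b) - UU F b y) / b"
definition T2 :: "(real \<Rightarrow> real) \<Rightarrow> real \<Rightarrow> real \<Rightarrow> real" where
  "T2 F b y = ((F (y+b+b) - F (y+b)) / b - (F (y+b) - F y) / b) / b"

lemma deriv_int_interior:
  assumes "continuous_on {c..z+1} G" "c < z"
  shows "((\<lambda>u. integral {c..u} G) has_real_derivative G z) (at z)"
proof -
  have "((\<lambda>u. integral {c..u} G) has_real_derivative G z) (at z within {c..z+1})"
    by (rule integral_has_real_derivative) (use assms in auto)
  moreover have "at z within {c..z+1} = at z" by (rule at_within_Icc_at) (use assms in auto)
  ultimately show ?thesis by simp
qed

context
  fixes F :: "real \<Rightarrow> real"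
  assumes Fc: "continuous_on UNIV F"
begin

lemma PP_der: "z > -2 \<Longrightarrow> (PP F has_real_derivative F z) (at z)"
  unfolding PP_def[abs_def]
  by (rule deriv_int_interior) (use Fc continuous_on_subset in auto)

lemma UU_der: "y > -2 \<Longrightarrow> b > 0 \<Longrightarrow> (UU F b has_real_derivative (F (y+b) - F y) / b) (at y)"
proof -
  assume y: "y > -2" and b: "b > 0"
  have 1: "((\<lambda>y. PP F (y + b)) has_real_derivative F (y+b)) (at y)"
    using PP_der[of "y+b"] y b DERIV_shift[of "PP F" "F (y+b)" y b] by simp
  have 2: "(PP F has_real_derivative F y) (at y)" using PP_der y by simp
  show ?thesis unfolding UU_def[abs_def]
    by (intro DERIV_cdivide DERIV_diff 1 2)
qed

lemma UU_cont: "b > 0 \<Longrightarrow> continuous_on {-1..w} (UU F b)"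
  by (intro continuous_at_imp_continuous_on ballI DERIV_isCont[OF UU_der]) auto

lemma QQ_der: "z > -1 \<Longrightarrow> b > 0 \<Longrightarrow> (QQ F b has_real_derivative UU F b z) (at z)"
  unfolding QQ_def[abs_def] by (rule deriv_int_interior) (use UU_cont in auto)

lemma TT_der: "y > -1 \<Longrightarrow> b > 0 \<Longrightarrow> (TT F b has_real_derivative T1 F b y) (at y)"
proof -
  assume y: "y > -1" and b: "b > 0"
  have 1: "((\<lambda>y. QQ F b (y + b)) has_real_derivative UU F b (y+b)) (at y)"
    using QQ_der[of "y+b" b] y b DERIV_shift[of "QQ F b" "UU F b (y+b)" y b] by simp
  have 2: "(QQ F b has_real_derivative UU F b y) (at y)" using QQ_der y b by simp
  show ?thesis unfolding TT_def[abs_def] T1_def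
    by (intro DERIV_cdivide DERIV_diff 1 2)
qed

lemma T1_der: "y > -1 \<Longrightarrow> b > 0 \<Longrightarrow> (T1 F b has_real_derivative T2 F b y) (at y)"
proof -
  assume y: "y > -1" and b: "b > 0"
  have 1: "((\<lambda>y. UU F b (y + b)) has_real_derivative (F (y+b+b) - F (y+b)) / b) (at y)"
    using UU_der[of "y+b" b] y b DERIV_shift[of "UU F b" _ y b] by simp
  have 2: "(UU F b has_real_derivative (F (y+b) - F y) / b) (at y)" using UU_der y b by simp
  show ?thesis unfolding T1_def[abs_def] T2_def
    by (intro DERIV_cdivide DERIV_diff 1 2)
qed

lemma ftc_lin:
  assumes G: "\<And>u. u \<ge> y \<Longrightarrow> (G has_real_derivative G' u) (at u)" and m: "m > 0" and a: "a > 0"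
  shows "((\<lambda>t. G' (m * t + y)) has_integral a * ((G (y + m * a) - G y) / (m * a))) {0..a}"
proof -
  have "((\<lambda>t. G' (m * t + y)) has_integral ((\<lambda>t. G (m * t + y) / m) a - (\<lambda>t. G (m * t + y) / m) 0)) {0..a}"
  proof (rule fundamental_theorem_of_calculus)
    show "0 \<le> a" using a by simp
    fix t assume t: "t \<in> {0..a}"
    have "(G has_real_derivative G' (m * t + y)) (at (m * t + y))"
      using G t m by simp
    hence dd: "((\<lambda>t. G (m * t + y)) has_real_derivative G' (m * t + y) * m) (at t)"
      by (rule DERIV_chain2) (auto intro!: derivative_eq_intros)
    have "((\<lambda>t. G (m * t + y) / m) has_real_derivative G' (m * t + y)) (at t)"
      using DERIV_cdivide[OF dd, of m] m by simp
    thus "((\<lambda>t. G (m * t + y) / m) has_vector_derivative G' (m * t + y)) (at t within {0..a})"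
      by (simp add: has_real_derivative_iff_has_vector_derivative[symmetric] has_field_derivative_at_within)
  qed
  also have "(\<lambda>t. G (m * t + y) / m) a - (\<lambda>t. G (m * t + y) / m) 0 = a * ((G (y + m * a) - G y) / (m * a))"
    using m a by (simp add: field_simps)
  finally show ?thesis .
qed

lemma int_UU: "m > 0 \<Longrightarrow> a > 0 \<Longrightarrow> y \<ge> -1 \<Longrightarrow>
  ((\<lambda>t. F (m * t + y)) has_integral a * UU F (m * a) y) {0..a}"
  unfolding UU_def by (rule ftc_lin) (auto intro: PP_der)

lemma int_TT: "m > 0 \<Longrightarrow> a > 0 \<Longrightarrow> y \<ge> 0 \<Longrightarrow>
  ((\<lambda>s. UU F (m * a) (m * s + y)) has_integral a * TT F (m * a) y) {0..a}"
  unfolding TT_def by (rule ftc_lin) (auto intro: QQ_der)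

end


lemma avg_bound:
  fixes f :: "real \<Rightarrow> real"
  assumes "(f has_integral a * v) {0..a}" "a > 0" "\<And>t. t \<in> {0..a} \<Longrightarrow> \<bar>f t\<bar> \<le> W" "W \<ge> 0"
  shows "\<bar>v\<bar> \<le> W"
proof -
  have 1: "\<And>x. x \<in> cbox 0 a \<Longrightarrow> norm (f x) \<le> W" using assms(3) by auto
  note 2 = has_integral_bound[OF assms(4) assms(1)[folded box_real(2)] 1]
  hence "a * \<bar>v\<bar> \<le> W * a" using assms(2) by (simp add: abs_mult)
  thus ?thesis using assms(2) by (simp add: mult.commute)
qed

lemma smoothing:
  fixes \<Phi> :: "real \<Rightarrow> real"
  assumes cont: "continuous_on {0..} \<Phi>" and h: "h > 0"
    and W: "\<And>\<epsilon> y. 0 < \<epsilon> \<Longrightarrow> \<epsilon> \<le> h \<Longrightarrow> y \<ge> 0 \<Longrightarrow> \<bar>\<Phi> (y + 2* \<epsilon>) - 2 * \<Phi> (y + \<epsilon>) + \<Phi> y\<bar> \<le> W"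
  shows "\<exists>g g1. continuous_on {0..} g \<and> (\<forall>y\<ge>0. \<bar>\<Phi> y - g y\<bar> \<le> W) \<and>
     (\<forall>y\<ge>0. \<forall>t\<ge>0. \<bar>g t - g y - g1 y * (t - y)\<bar> \<le> (9 * W / h^2) * (t - y)^2)"
proof -
  define F where "F = (\<lambda>u. \<Phi> (max 0 u))"
  have Fc: "continuous_on UNIV F" unfolding F_def
    by (rule continuous_on_compose2[OF cont continuous_on_max[OF continuous_on_const continuous_on_id]]) auto
  have FP: "F u = \<Phi> u" if "u \<ge> 0" for u using that by (simp add: F_def)
  have W0: "W \<ge> 0" using W[of h 0] h by (intro order_trans[OF abs_ge_zero]) simp
  define a where "a = h / 2"
  have a: "a > 0" using h by (simp add: a_def)
  define g where "g = (\<lambda>y. 2 * TT F a y - TT F (2* a) y)"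
  define g1 where "g1 = (\<lambda>y. 2 * T1 F a y - T1 F (2* a) y)"
  define g2 where "g2 = (\<lambda>y. 2 * T2 F a y - T2 F (2* a) y)"
  have gd: "(g has_real_derivative g1 y) (at y)" if "y > -1" for y
  proof -
    have A: "(TT F a has_real_derivative T1 F a y) (at y)" by (rule TT_der[OF Fc that]) (use a in simp)
    have B: "(TT F (2* a) has_real_derivative T1 F (2* a) y) (at y)" by (rule TT_der[OF Fc that]) (use a in simp)
    show ?thesis unfolding g_def g1_def by (rule DERIV_diff[OF DERIV_cmult[OF A] B])
  qed
  have g1d: "(g1 has_real_derivative g2 y) (at y)" if "y > -1" for y
  proof -
    have A: "(T1 F a has_real_derivative T2 F a y) (at y)" by (rule T1_der[OF Fc that]) (use a in simp)
    have B: "(T1 F (2* a) has_real_derivative T2 F (2* a) y) (at y)" by (rule T1_der[OF Fc that]) (use a in simp)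
    show ?thesis unfolding g1_def g2_def by (rule DERIV_diff[OF DERIV_cmult[OF A] B])
  qed
  have T2b: "\<bar>T2 F b z\<bar> \<le> W / b^2" if "z \<ge> 0" "0 < b" "b \<le> h" for z b
  proof -
    have e: "((p - q) / b - (q - r) / b) / b = (p - 2 * q + r) / b^2" for p q r
      using that by (simp add: power2_eq_square diff_divide_distrib[symmetric] divide_divide_eq_left)
    have "z + b + b = z + 2 * b" by simp
    hence "T2 F b z = (\<Phi> (z + 2* b) - 2 * \<Phi> (z + b) + \<Phi> z) / b^2"
      unfolding T2_def e using that FP by (simp add: add.commute)
    thus ?thesis using W[of b z] that by (simp add: abs_divide divide_right_mono)
  qed
  have g2b: "\<bar>g2 z\<bar> \<le> 9 * W / h^2" if "z \<ge> 0" for z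
  proof -
    have ha: "2 * a = h" by (simp add: a_def)
    have 1: "\<bar>T2 F a z\<bar> \<le> W / a^2" by (rule T2b) (use that a ha in auto)
    have 2: "\<bar>T2 F (2* a) z\<bar> \<le> W / (2* a)^2" by (rule T2b) (use that a ha in auto)
    have "\<bar>g2 z\<bar> \<le> 2 * (W / a^2) + W / (2* a)^2" unfolding g2_def using 1 2 by linarith
    also have "\<dots> = 9 * W / (2* a)^2" by (simp add: power2_eq_square field_simps)
    also have "\<dots> = 9 * W / h^2" by (simp only: ha)
    finally show ?thesis .
  qed
  have gcont: "continuous_on {0..} g"
    by (intro continuous_at_imp_continuous_on ballI DERIV_isCont[OF gd]) auto
  have approx: "\<bar>\<Phi> x - g x\<bar> \<le> W" if x: "x \<ge> 0" for x
  proof -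
    have inner: "\<bar>F x - 2 * UU F a (s + x) + UU F (2* a) (2* s + x)\<bar> \<le> W" if s: "s \<in> {0..a}" for s
    proof -
      have i1: "((\<lambda>t. F (1 * t + (s + x))) has_integral a * UU F (1 * a) (s + x)) {0..a}"
        by (rule int_UU[OF Fc]) (use a s x in auto)
      have i2: "((\<lambda>t. F (2 * t + (2 * s + x))) has_integral a * UU F (2 * a) (2 * s + x)) {0..a}"
        by (rule int_UU[OF Fc]) (use a s x in auto)
      have i0: "((\<lambda>t. F x) has_integral a * F x) {0..a}"
        using has_integral_const_real[of "F x" 0 a] a by (simp add: content_real)
      have "((\<lambda>t. F x - 2 * F (1 * t + (s + x)) + F (2 * t + (2 * s + x))) has_integral
              a * F x - 2 * (a * UU F (1 * a) (s + x)) + a * UU F (2 * a) (2 * s + x)) {0..a}"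
        by (intro has_integral_add has_integral_diff has_integral_mult_right i0 i1 i2)
      hence "((\<lambda>t. F x - 2 * F (1 * t + (s + x)) + F (2 * t + (2 * s + x))) has_integral
              a * (F x - 2 * UU F a (s + x) + UU F (2 * a) (2 * s + x))) {0..a}"
        by (simp add: algebra_simps)
      thus ?thesis
      proof (rule avg_bound[OF _ a _ W0])
        fix t assume t: "t \<in> {0..a}"
        define e where "e = s + t"
        have e: "0 \<le> e" "e \<le> h" using s t a by (auto simp: e_def a_def)
        have "F x - 2 * F (1 * t + (s + x)) + F (2 * t + (2 * s + x)) = \<Phi> (x + 2* e) - 2 * \<Phi> (x + e) + \<Phi> x"
          using FP x s t by (simp add: e_def algebra_simps)
        moreover have "\<bar>\<Phi> (x + 2* e) - 2 * \<Phi> (x + e) + \<Phi> x\<bar> \<le> W"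
        proof (cases "e = 0")
          case True thus ?thesis using W0 by simp
        next
          case False thus ?thesis using W[of e x] e x by simp
        qed
        ultimately show "\<bar>F x - 2 * F (1 * t + (s + x)) + F (2 * t + (2 * s + x))\<bar> \<le> W" by simp
      qed
    qed
    have o1: "((\<lambda>s. UU F (1 * a) (1 * s + x)) has_integral a * TT F (1 * a) x) {0..a}"
      by (rule int_TT[OF Fc]) (use a x in auto)
    have o2: "((\<lambda>s. UU F (2 * a) (2 * s + x)) has_integral a * TT F (2 * a) x) {0..a}"
      by (rule int_TT[OF Fc]) (use a x in auto)
    have o0: "((\<lambda>s. F x) has_integral a * F x) {0..a}"
      using has_integral_const_real[of "F x" 0 a] a by (simp add: content_real)
    have "((\<lambda>s. F x - 2 * UU F (1 * a) (1 * s + x) + UU F (2 * a) (2 * s + x)) has_integral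
            a * F x - 2 * (a * TT F (1 * a) x) + a * TT F (2 * a) x) {0..a}"
      by (intro has_integral_add has_integral_diff has_integral_mult_right o0 o1 o2)
    hence "((\<lambda>s. F x - 2 * UU F a (s + x) + UU F (2 * a) (2 * s + x)) has_integral
            a * (F x - g x)) {0..a}"
      by (simp add: algebra_simps g_def)
    hence "\<bar>F x - g x\<bar> \<le> W" by (rule avg_bound[OF _ a inner W0])
    thus ?thesis using FP x by simp
  qed
  have taylor: "\<bar>g t - g y - g1 y * (t - y)\<bar> \<le> (9 * W / h^2) * (t - y)^2" if "y \<ge> 0" "t \<ge> 0" for y t
    by (rule taylor2_bound[where ?g2.0 = g2]) (use that gd g1d g2b in auto)
  show ?thesis using gcont approx taylor by blast
qed


lemma modsmooth2_ge:
  assumes B: "\<And>y. y \<ge> 0 \<Longrightarrow> \<bar>\<Phi> y\<bar> \<le> Bd" and "0 < \<epsilon>" "\<epsilon> \<le> t" "y \<ge> 0"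
  shows "\<bar>\<Phi> (y + 2 * \<epsilon>) - 2 * \<Phi> (y + \<epsilon>) + \<Phi> y\<bar> \<le> modsmooth2 \<Phi> t"
  unfolding modsmooth2_def
proof (rule cSup_upper)
  show "\<bar>\<Phi> (y + 2 * \<epsilon>) - 2 * \<Phi> (y + \<epsilon>) + \<Phi> y\<bar> \<in>
    {\<bar>\<Phi> (y + 2 * \<epsilon>) - 2 * \<Phi> (y + \<epsilon>) + \<Phi> y\<bar> | \<epsilon> y. 0 < \<epsilon> \<and> \<epsilon> \<le> t \<and> y \<ge> 0}"
    using assms by blast
  show "bdd_above {\<bar>\<Phi> (y + 2 * \<epsilon>) - 2 * \<Phi> (y + \<epsilon>) + \<Phi> y\<bar> | \<epsilon> y. 0 < \<epsilon> \<and> \<epsilon> \<le> t \<and> y \<ge> 0}"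
  proof (rule bdd_aboveI[of _ "4 * Bd"], clarify)
    fix e z :: real assume ez: "0 < e" "e \<le> t" "z \<ge> 0"
    have "\<bar>\<Phi> (z + 2 * e)\<bar> \<le> Bd" "\<bar>\<Phi> (z + e)\<bar> \<le> Bd" "\<bar>\<Phi> z\<bar> \<le> Bd" using B ez by auto
    thus "\<bar>\<Phi> (z + 2 * e) - 2 * \<Phi> (z + e) + \<Phi> z\<bar> \<le> 4 * Bd" by (simp add: abs_le_iff)
  qed
qed

lemma modcont_ge:
  assumes B: "\<And>y. y \<ge> 0 \<Longrightarrow> \<bar>\<Phi> y\<bar> \<le> Bd" and "z \<ge> 0" "y \<ge> 0" "\<bar>z - y\<bar> \<le> t"
  shows "\<bar>\<Phi> z - \<Phi> y\<bar> \<le> modcont \<Phi> t"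
  unfolding modcont_def
proof (rule cSup_upper)
  show "\<bar>\<Phi> z - \<Phi> y\<bar> \<in> {\<bar>\<Phi> z - \<Phi> y\<bar> | z y. z \<ge> 0 \<and> y \<ge> 0 \<and> \<bar>z - y\<bar> \<le> t}"
    using assms by blast
  show "bdd_above {\<bar>\<Phi> z - \<Phi> y\<bar> | z y. z \<ge> 0 \<and> y \<ge> 0 \<and> \<bar>z - y\<bar> \<le> t}"
  proof (rule bdd_aboveI[of _ "2 * Bd"], clarify)
    fix u v :: real assume uv: "u \<ge> 0" "v \<ge> 0"
    have "\<bar>\<Phi> u\<bar> \<le> Bd" "\<bar>\<Phi> v\<bar> \<le> Bd" using B uv by auto
    thus "\<bar>\<Phi> u - \<Phi> v\<bar> \<le> 2 * Bd" by (simp add: abs_le_iff)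
  qed
qed

theorem mainTheorem5:
  shows "\<exists>M::real. M > 0 \<and>
    (\<forall>\<alpha> \<beta> \<eta> (\<Phi>::real \<Rightarrow> real) x.
       \<alpha> > -1 \<longrightarrow> \<beta> > 0 \<longrightarrow> \<eta> > 0 \<longrightarrow>
       continuous_on {0..} \<Phi> \<longrightarrow> bounded (\<Phi> ` {0..}) \<longrightarrow> x \<ge> 0 \<longrightarrow>
       \<bar>R_op \<alpha> \<beta> \<eta> \<Phi> x - \<Phi> x\<bar>
         \<le> M * modsmooth2 \<Phi> (sqrt ((mu2 \<alpha> \<beta> \<eta> x + ((1 + \<alpha>) / \<eta>)^2) / 2))
           + modcont \<Phi> ((1 + \<alpha>) / \<eta>))"
proof (intro exI[of _ 20] conjI allI impI)
  show "(20::real) > 0" by simp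
  fix \<alpha> \<beta> \<eta> :: real and \<Phi> :: "real \<Rightarrow> real" and x :: real
  assume a: "\<alpha> > -1" and b: "\<beta> > 0" and e: "\<eta> > 0" and \<Phi>c: "continuous_on {0..} \<Phi>"
    and bdd: "bounded (\<Phi> ` {0..})" and x: "x \<ge> 0"
  obtain Bd where B: "\<And>y. y \<ge> 0 \<Longrightarrow> \<bar>\<Phi> y\<bar> \<le> Bd"
    using bdd unfolding bounded_iff by auto
  define c where "c = (1 + \<alpha>) / \<eta>"
  have c0: "c > 0" using a e by (simp add: c_def)
  have mu0: "mu2 \<alpha> \<beta> \<eta> x \<ge> 0"
  proof -
    have "\<alpha>^2 * \<beta> + 4 * \<alpha> * \<beta> + 3 * \<beta> + \<alpha> + 1 = (\<alpha> + 1) * (\<beta> * (\<alpha> + 3) + 1)"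
      by (simp add: algebra_simps power2_eq_square)
    also have "\<dots> \<ge> 0" using a b by (intro mult_nonneg_nonneg) auto
    finally have 1: "\<alpha>^2 * \<beta> + 4 * \<alpha> * \<beta> + 3 * \<beta> + \<alpha> + 1 \<ge> 0" .
    have 2: "x * (3 * \<beta> + 1) / (\<beta> * \<eta>) \<ge> 0" using b e x by simp
    have 3: "(\<alpha>^2 * \<beta> + 4 * \<alpha> * \<beta> + 3 * \<beta> + \<alpha> + 1) / (\<beta> * \<eta>^2) \<ge> 0"
      using 1 b e by simp
    show ?thesis unfolding mu2_def using 2 3 by linarith
  qed
  define \<delta> where "\<delta> = mu2 \<alpha> \<beta> \<eta> x + c^2"
  have d0: "\<delta> > 0" unfolding \<delta>_def using mu0 c0 by (simp add: add_nonneg_pos)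
  define h where "h = sqrt (\<delta> / 2)"
  have h0: "h > 0" unfolding h_def using d0 by simp
  have h2: "h^2 = \<delta> / 2" unfolding h_def using d0 by simp
  define W where "W = modsmooth2 \<Phi> h"
  have Wp: "\<bar>\<Phi> (y + 2 * \<epsilon>) - 2 * \<Phi> (y + \<epsilon>) + \<Phi> y\<bar> \<le> W" if "0 < \<epsilon>" "\<epsilon> \<le> h" "y \<ge> 0" for \<epsilon> y
    unfolding W_def by (rule modsmooth2_ge[OF B that])
  have W0: "W \<ge> 0" using Wp[of h 0] h0 by (intro order_trans[OF abs_ge_zero]) simp
  obtain g g1 where gc: "continuous_on {0..} g" and gap: "\<And>y. y \<ge> 0 \<Longrightarrow> \<bar>\<Phi> y - g y\<bar> \<le> W"
    and gt: "\<And>y t. y \<ge> 0 \<Longrightarrow> t \<ge> 0 \<Longrightarrow> \<bar>g t - g y - g1 y * (t - y)\<bar> \<le> (9 * W / h^2) * (t - y)^2"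
    using smoothing[OF \<Phi>c h0 Wp] by blast
  have L0: "9 * W / h^2 \<ge> 0" using W0 by simp
  have "\<bar>R_op \<alpha> \<beta> \<eta> \<Phi> x - \<Phi> x\<bar> \<le> 2 * W + (9 * W / h^2) * (mu2 \<alpha> \<beta> \<eta> x + ((1 + \<alpha>) / \<eta>)^2)
            + \<bar>\<Phi> (x + (1 + \<alpha>) / \<eta>) - \<Phi> x\<bar>"
    by (rule operator_bound[OF a b e x \<Phi>c gc gap gt[OF x] L0])
  also have "(9 * W / h^2) * (mu2 \<alpha> \<beta> \<eta> x + ((1 + \<alpha>) / \<eta>)^2) = 18 * W"
    using d0 unfolding h2 \<delta>_def[symmetric] c_def[symmetric] by (simp add: field_simps)
  also have "\<bar>\<Phi> (x + (1 + \<alpha>) / \<eta>) - \<Phi> x\<bar> \<le> modcont \<Phi> ((1 + \<alpha>) / \<eta>)"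
    by (rule modcont_ge[OF B]) (use x c0 in \<open>auto simp: c_def\<close>)
  finally show "\<bar>R_op \<alpha> \<beta> \<eta> \<Phi> x - \<Phi> x\<bar>
         \<le> 20 * modsmooth2 \<Phi> (sqrt ((mu2 \<alpha> \<beta> \<eta> x + ((1 + \<alpha>) / \<eta>)^2) / 2))
           + modcont \<Phi> ((1 + \<alpha>) / \<eta>)"
    unfolding W_def h_def \<delta>_def c_def by simp
qed


end
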